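(* Let $\mathcal{G}=\{G_1,\ldots,G_m\}$ be a consecutive grouped weight partition of $\mathbb{F}_q^k$, with $G_j=\bigcup_{i\in S_j}W_i$ where each $S_j=\{a_j,a_j+1,\ldots,b_j\}$ is an integer interval, the $S_j$ partition $\{0,\ldots,k\}$, and the blocks are ordered so that $\max S_r<\min S_s$ whenever $r<s$. If $|S_\ell|\ge 2$ for some $\ell\in\{2,\ldots,m-1\}$, then the partition graph of $\mathcal{G}$ contains no clique of size $m$.
   Context: $W_i=\{u\in\mathbb{F}_q^k:\mathrm{wt}(u)=i\}$ (Hamming weight). $d$ is Hamming distance; for distinct blocks $d(P,P')=\min_{u\in P,v\in P'}d(u,v)$. The partition graph $G_{\mathcal{P}}$ of a partition $\mathcal{P}$ of $\mathbb{F}_q^k$ has vertex set $\mathbb{F}_q^k$, and vertices $u\in P$, $v\in P'$ (blocks of $\mathcal{P}$) are adjacent iff $P\ne P'$ and $d(u,v)=d(P,P')$. *)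

theory Defs
  imports "HOL-Analysis.Analysis"
begin

text \<open>Vectors of F_q^k are modelled as elements of type 'a ^ 'n, where 'a is a finite
field (F_q) and k = CARD('n).\<close>

definition hweight :: "'a::zero ^ 'n::finite \<Rightarrow> nat" where
  "hweight u = card {i. u $ i \<noteq> 0}"

definition hdist :: "'a ^ 'n::finite \<Rightarrow> 'a ^ 'n \<Rightarrow> nat" where
  "hdist u v = card {i. u $ i \<noteq> v $ i}"

definition weight_class :: "nat \<Rightarrow> ('a::zero ^ 'n::finite) set" where
  "weight_class i = {u. hweight u = i}"

definition block_dist :: "('a ^ 'n::finite) set \<Rightarrow> ('a ^ 'n) set \<Rightarrow> nat" where
  "block_dist P P' = Min {hdist u v | u v. u \<in> P \<and> v \<in> P'}"

definition partition_graph_adj ::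
  "('a ^ 'n::finite) set set \<Rightarrow> 'a ^ 'n \<Rightarrow> 'a ^ 'n \<Rightarrow> bool" where
  "partition_graph_adj \<P> u v \<longleftrightarrow>
     (\<exists>P\<in>\<P>. \<exists>P'\<in>\<P>. P \<noteq> P' \<and> u \<in> P \<and> v \<in> P' \<and> hdist u v = block_dist P P')"

definition is_clique :: "('v \<Rightarrow> 'v \<Rightarrow> bool) \<Rightarrow> 'v set \<Rightarrow> bool" where
  "is_clique E C \<longleftrightarrow> (\<forall>u\<in>C. \<forall>v\<in>C. u \<noteq> v \<longrightarrow> E u v)"

end

theory Submission
  imports Defs
begin

lemma hweight_le_hdist:
  fixes u v :: "'a::zero ^ 'n::finite"
  shows "hweight v \<le> hweight u + hdist u v"
proof -
  have "{i. v $ i \<noteq> 0} \<subseteq> {i. u $ i \<noteq> 0} \<union> {i. u $ i \<noteq> v $ i}" by auto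
  hence "card {i. v $ i \<noteq> 0} \<le> card ({i. u $ i \<noteq> 0} \<union> {i. u $ i \<noteq> v $ i})"
    by (intro card_mono) auto
  also have "\<dots> \<le> card {i. u $ i \<noteq> 0} + card {i. u $ i \<noteq> v $ i}" by (rule card_Un_le)
  finally show ?thesis unfolding hweight_def hdist_def .
qed

lemma witness_vecs:
  assumes "w1 \<le> w2" "w2 \<le> CARD('n::finite)"
  shows "\<exists>x y :: ('a::{finite,field} ^ 'n). hweight x = w1 \<and> hweight y = w2 \<and> hdist x y = w2 - w1"
proof -
  obtain f :: "'n \<Rightarrow> nat" where f: "bij_betw f UNIV {0..<CARD('n)}"
    using ex_bij_betw_finite_nat[of "UNIV :: 'n set"] by auto
  have inj: "inj f" using f unfolding bij_betw_def by (rule conjunct1)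
  have im: "f ` UNIV = {0..<CARD('n)}" using f unfolding bij_betw_def by (rule conjunct2)
  define vec :: "nat \<Rightarrow> 'a ^ 'n" where "vec w = (\<chi> i. if f i < w then 1 else 0)" for w
  have cnt: "card {i. p \<le> f i \<and> f i < w} = w - p" if "w \<le> CARD('n)" for p w
  proof -
    have "f ` {i. p \<le> f i \<and> f i < w} = {p..<w}"
    proof
      show "f ` {i. p \<le> f i \<and> f i < w} \<subseteq> {p..<w}" by auto
      show "{p..<w} \<subseteq> f ` {i. p \<le> f i \<and> f i < w}"
      proof
        fix t assume t: "t \<in> {p..<w}"
        then have "t \<in> f ` UNIV" using im that by auto
        then obtain i where "t = f i" by auto
        then show "t \<in> f ` {i. p \<le> f i \<and> f i < w}" using t by auto
      qed
    qed
    moreover have "inj_on f {i. p \<le> f i \<and> f i < w}" using inj by (simp add: inj_on_def inj_def)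
    ultimately show ?thesis using card_image by fastforce
  qed
  have "hweight (vec w1) = w1"
  proof -
    have "{i. vec w1 $ i \<noteq> 0} = {i. 0 \<le> f i \<and> f i < w1}" by (auto simp: vec_def)
    thus ?thesis unfolding hweight_def using cnt[of w1 0] assms by simp
  qed
  moreover have "hweight (vec w2) = w2"
  proof -
    have "{i. vec w2 $ i \<noteq> 0} = {i. 0 \<le> f i \<and> f i < w2}" by (auto simp: vec_def)
    thus ?thesis unfolding hweight_def using cnt[of w2 0] assms by simp
  qed
  moreover have "hdist (vec w1) (vec w2) = w2 - w1"
  proof -
    have "{i. vec w1 $ i \<noteq> vec w2 $ i} = {i. w1 \<le> f i \<and> f i < w2}" using assms by (auto simp: vec_def)
    thus ?thesis unfolding hdist_def using cnt[of w2 w1] assms by simp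
  qed
  ultimately show ?thesis by blast
qed

lemma block_dist_le:
  fixes P P' :: "('a::{finite,field} ^ 'n::finite) set"
  assumes "x \<in> P" "y \<in> P'"
  shows "block_dist P P' \<le> hdist x y"
proof -
  have "finite {hdist u v | u v. u \<in> P \<and> v \<in> P'}"
  proof (rule finite_subset)
    show "{hdist u v | u v. u \<in> P \<and> v \<in> P'} \<subseteq> (\<lambda>(u,v). hdist u v) ` (UNIV :: (('a ^ 'n) \<times> ('a ^ 'n)) set)"
      by auto
  qed simp
  thus ?thesis unfolding block_dist_def using assms by (intro Min_le) auto
qed


lemma mono_ab:
  fixes a b :: "nat \<Rightarrow> nat"
  assumes "\<And>j. j \<in> {1..m} \<Longrightarrow> a j \<le> b j"
    and "\<And>j. j \<in> {1..<m} \<Longrightarrow> a (Suc j) = Suc (b j)"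
    and "1 \<le> j" "j < j'" "j' \<le> m"
  shows "b j < a j'"
proof -
  have "\<forall>d. j + Suc d \<le> m \<longrightarrow> b j < a (j + Suc d)"
  proof
    fix d show "j + Suc d \<le> m \<longrightarrow> b j < a (j + Suc d)"
    proof (induction d)
      case 0
      then show ?case using assms(2)[of j] assms(3) by auto
    next
      case (Suc d)
      show ?case
      proof
        assume h: "j + Suc (Suc d) \<le> m"
        have "b j < a (j + Suc d)" using Suc h by auto
        also have "a (j + Suc d) \<le> b (j + Suc d)" using assms(1)[of "j + Suc d"] h assms(3) by auto
        also have "b (j + Suc d) < a (Suc (j + Suc d))" using assms(2)[of "j + Suc d"] h assms(3) by auto
        finally show "b j < a (j + Suc (Suc d))" by simp
      qed
    qed
  qed
  moreover obtain d where d: "j' = j + Suc d" using less_imp_Suc_add[OF assms(4)] by (elim exE) simp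
  ultimately show ?thesis using assms(5) by simp
qed

theorem lemma9:
  fixes a b :: "nat \<Rightarrow> nat" and m l :: nat
  assumes "m \<ge> 1"
    and "\<And>j. j \<in> {1..m} \<Longrightarrow> a j \<le> b j"
    and "a 1 = 0"
    and "b m = CARD('n::finite)"
    and "\<And>j. j \<in> {1..<m} \<Longrightarrow> a (Suc j) = Suc (b j)"
    and "l \<in> {2..m-1}"
    and "card {a l..b l} \<ge> 2"
  shows "\<not> (\<exists>C :: ('a::{finite,field} ^ 'n) set. card C = m \<and>
            is_clique (partition_graph_adj
               ((\<lambda>j. \<Union>i\<in>{a j..b j}. weight_class i) ` {1..m})) C)"
proof
  define G :: "nat \<Rightarrow> ('a ^ 'n) set" where "G j = (\<Union>i\<in>{a j..b j}. weight_class i)" for j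
  assume "\<exists>C :: ('a ^ 'n) set. card C = m \<and>
            is_clique (partition_graph_adj
               ((\<lambda>j. \<Union>i\<in>{a j..b j}. weight_class i) ` {1..m})) C"
  then obtain C :: "('a ^ 'n) set" where cC: "card C = m"
    and cl: "is_clique (partition_graph_adj (G ` {1..m})) C"
    unfolding G_def by blast
  have memG: "u \<in> G j \<longleftrightarrow> hweight u \<in> {a j..b j}" for u j
    unfolding G_def weight_class_def by auto
  have mono: "b j < a j'" if "1 \<le> j" "j < j'" "j' \<le> m" for j j'
    using mono_ab[of m a b j j'] assms(2,5) that by blast
  have bm: "b j \<le> CARD('n)" if "j \<in> {1..m}" for j
  proof (cases "j = m")
    case True then show ?thesis using assms(4) by simp
  next
    case False
    then have "b j < a m" using mono[of j m] that by auto
    then show ?thesis using assms(2)[of m] assms(1,4) by auto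
  qed
  have uniq: "j = j'" if "j \<in> {1..m}" "j' \<in> {1..m}" "w \<in> {a j..b j}" "w \<in> {a j'..b j'}" for j j' w
  proof (rule ccontr)
    assume "j \<noteq> j'"
    then consider "j < j'" | "j' < j" by linarith
    then show False
    proof cases
      case 1 then show False using mono[of j j'] that by auto
    next
      case 2 then show False using mono[of j' j] that by auto
    qed
  qed
  have l1: "1 < l" "l < m" using assms(6) by auto
  have finC: "finite C" by simp
  have adj: "\<exists>j\<in>{1..m}. \<exists>j'\<in>{1..m}. j \<noteq> j' \<and> hweight u \<in> {a j..b j} \<and> hweight v \<in> {a j'..b j'}
      \<and> hdist u v = block_dist (G j) (G j')"
    if "u \<in> C" "v \<in> C" "u \<noteq> v" for u v
  proof -
    have "partition_graph_adj (G ` {1..m}) u v" using cl that unfolding is_clique_def by blast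
    then obtain j j' where jj: "j \<in> {1..m}" "j' \<in> {1..m}" "G j \<noteq> G j'" "u \<in> G j" "v \<in> G j'"
      "hdist u v = block_dist (G j) (G j')"
      unfolding partition_graph_adj_def by blast
    have "j \<noteq> j'" using jj(3) by auto
    moreover have "hweight u \<in> {a j..b j}" using jj(4) memG by blast
    moreover have "hweight v \<in> {a j'..b j'}" using jj(5) memG by blast
    ultimately show ?thesis using jj(1,2,6) by blast
  qed
  have exj: "\<exists>j\<in>{1..m}. hweight u \<in> {a j..b j}" if "u \<in> C" for u
  proof -
    have "card C \<ge> 2" using cC l1 by auto
    then have "card (C - {u}) \<ge> 1" using card_Diff_singleton[OF that] by simp
    then have "C - {u} \<noteq> {}" by (metis card.empty not_one_le_zero)
    then obtain v where "v \<in> C" "v \<noteq> u" by blast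
    then show ?thesis using adj[of u v] that by blast
  qed
  define g :: "'a ^ 'n \<Rightarrow> nat" where "g u = (THE j. j \<in> {1..m} \<and> hweight u \<in> {a j..b j})" for u
  have gprop: "g u \<in> {1..m} \<and> hweight u \<in> {a (g u)..b (g u)}" if uC: "u \<in> C" for u
  proof -
    obtain j where j: "j \<in> {1..m}" "hweight u \<in> {a j..b j}" using exj uC by blast
    have "g u = j" unfolding g_def
      by (rule the_equality) (use j uniq in blast)+
    then show ?thesis using j by simp
  qed
  have gis: "g u = j" if "u \<in> C" "j \<in> {1..m}" "hweight u \<in> {a j..b j}" for u j
    using uniq gprop that by blast
  have K: "hweight u = b (g u) \<and> hweight v = a (g v)"
    if uvC: "u \<in> C" "v \<in> C" "u \<noteq> v" "g u < g v" for u v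
  proof -
    obtain j j' where jj: "j \<in> {1..m}" "j' \<in> {1..m}" "hweight u \<in> {a j..b j}" "hweight v \<in> {a j'..b j'}"
      "hdist u v = block_dist (G j) (G j')"
      using adj[OF uvC(1-3)] by blast
    have e: "j = g u" "j' = g v" using gis[of u j] gis[of v j'] jj uvC by auto
    have jlt: "j < j'" using e uvC by simp
    have bl: "b j < a j'" using mono[of j j'] jlt jj by auto
    have ak: "a j' \<le> CARD('n)" using bm[of j'] assms(2)[of j'] jj by auto
    obtain x y :: "'a ^ 'n" where xy: "hweight x = b j" "hweight y = a j'" "hdist x y = a j' - b j"
      using witness_vecs[of "b j" "a j'"] bl ak by (metis less_imp_le)
    have "x \<in> G j" "y \<in> G j'" using memG xy jj assms(2) by auto
    then have "block_dist (G j) (G j') \<le> a j' - b j" using block_dist_le xy by metis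
    moreover have "hweight v \<le> hweight u + hdist u v" by (rule hweight_le_hdist)
    ultimately show ?thesis using jj e bl by auto
  qed
  have inj: "inj_on g C"
  proof (rule inj_onI)
    fix u v assume uv: "u \<in> C" "v \<in> C" "g u = g v"
    show "u = v"
    proof (rule ccontr)
      assume "u \<noteq> v"
      then obtain j j' where jj: "j \<in> {1..m}" "j' \<in> {1..m}" "j \<noteq> j'" "hweight u \<in> {a j..b j}" "hweight v \<in> {a j'..b j'}"
        using adj[of u v] uv by blast
      then show False using gis[of u j] gis[of v j'] uv by simp
    qed
  qed
  have "g ` C \<subseteq> {1..m}" using gprop by auto
  moreover have "card (g ` C) = card {1..m}" using card_image[OF inj] cC by simp
  ultimately have gC: "g ` C = {1..m}" by (intro card_subset_eq) auto
  obtain u1 where u1: "u1 \<in> C" "g u1 = 1" using gC assms(1) by (metis atLeastAtMost_iff imageE order_refl)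
  obtain ul where ul: "ul \<in> C" "g ul = l" using gC l1 by (metis atLeastAtMost_iff imageE less_imp_le)
  obtain um where um: "um \<in> C" "g um = m" using gC assms(1) by (metis atLeastAtMost_iff imageE order_refl)
  have "hweight ul = a l" using K[of u1 ul] u1 ul l1 by (metis less_irrefl)
  moreover have "hweight ul = b l" using K[of ul um] ul um l1 by (metis less_irrefl)
  ultimately have "a l = b l" by simp
  then show False using assms(7) by simp
qed

end
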